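(* For all sufficiently large $K$ we have $\mathrm{Ran}(U)=\mathrm{Ran}(UP_K)$; in particular, the problems $\min_{z\in\mathbb C^K}\|z\|_{1,w}$ subject to $UP_Kz=y$, and $\min_{z\in\mathbb C^K}\|z\|_{1,w}$ subject to $\|UP_Kz-y\|\le\eta$, have solutions for all large $K$. Moreover, suppose $K$ is large enough that $\mathrm{Ran}(UP_K)=\mathrm{Ran}(U)$. If $x\in\ell^1_w(\mathbb N)$, then $$T_{h,K,\eta}(x)\le\|x-P_Kx\|_{1,w}+\frac{\|P_Kw\|}{\sigma_{\min}}\|x-P_Kx\|_{1,w},$$ where $\sigma_{\min}$ is the minimum singular value of $UP_K$. Moreover, if $\{w_i\}_{i\in\mathbb N}$ is nondecreasing and $x\in\ell^1_{\tilde w}(\mathbb N)$, where $\tilde w=\{\tilde w_i\}$ satisfies $\tilde w_i\ge\sqrt i\,w_i^2$ for all $i$, then $$T_{h,K,\eta}(x)\le\|x-P_Kx\|_{1,w}+\frac1{\sigma_{\min}}\|x-P_Kx\|_{1,\tilde w}.$$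
   Context: Setting: $D\subseteq\mathbb R^d$ a domain, $\nu\ge0$ integrable on $D$ with $\int_D\nu=1$, $\{\phi_i\}_{i\in\mathbb N}\subseteq L^2_\nu(D)\cap L^\infty(D)$ orthonormal in $L^2_\nu(D)$. $T=\{t_n\}_{n=1}^N\subseteq\overline D$ with Voronoi cells $V_n=\{t\in D:|t-t_n|\le|t-t_m|\ \forall m\ne n\}$ and quadrature weights $\tau_n=\int_{V_n}\nu$. Positive weights $w_i\ge\|\phi_i\|_{L^\infty}$; $\|z\|_{1,v}=\sum_iv_i|z_i|$ for positive weights $v$, with $\ell^1_v(\mathbb N)$ the associated space. $U$ is the $N\times\infty$ matrix $U_{n,i}=\sqrt{\tau_n}\phi_i(t_n)$. The target is $f=\sum_ix_i\phi_i$; data $y=\{\sqrt{\tau_n}(f(t_n)+e_n)\}_{n=1}^N$, $|e_n|\le\eta$. $P_K$ is the projection onto the first $K$ coordinates; $P_Kw=(w_1,\dots,w_K)$, $\|\cdot\|$ the $\ell^2$ norm. $\sigma_{\min}=\inf_{y'\in\mathbb C^N,\|y'\|=1}\|(UP_K)^*y'\|$. $T_{h,K,\eta}(x)=\inf\{\|x-\bar x\|_{1,w}:\bar x\in\mathbb C^K,\ \|UP_K\bar x-y\|\le\eta\}$. *)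

theory Defs
  imports "HOL-Analysis.Analysis"
begin

text \<open>Conventions: sequences in the paper indexed by i = 1,2,... are represented
  as functions on nat with the paper's index i corresponding to Isabelle index i-1.
  Vectors in C^N (resp. C^K) are functions nat => complex, only the entries
  n < N (resp. i < K) being relevant.\<close>

definition voronoi :: "'a::euclidean_space set \<Rightarrow> (nat \<Rightarrow> 'a) \<Rightarrow> nat \<Rightarrow> nat \<Rightarrow> 'a set" where
  "voronoi D t N n = {s \<in> D. \<forall>m<N. m \<noteq> n \<longrightarrow> dist s (t n) \<le> dist s (t m)}"

definition qweight :: "('a::euclidean_space \<Rightarrow> real) \<Rightarrow> 'a set \<Rightarrow> (nat \<Rightarrow> 'a) \<Rightarrow> nat \<Rightarrow> nat \<Rightarrow> real" where
  "qweight \<nu> D t N n = (LINT s:voronoi D t N n|lborel. \<nu> s)"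

definition norm1w :: "(nat \<Rightarrow> real) \<Rightarrow> (nat \<Rightarrow> complex) \<Rightarrow> real" where
  "norm1w v z = (\<Sum>i. v i * cmod (z i))"

definition in_l1w :: "(nat \<Rightarrow> real) \<Rightarrow> (nat \<Rightarrow> complex) \<Rightarrow> bool" where
  "in_l1w v z \<longleftrightarrow> summable (\<lambda>i. v i * cmod (z i))"

definition projK :: "nat \<Rightarrow> (nat \<Rightarrow> 'b::zero) \<Rightarrow> nat \<Rightarrow> 'b" where
  "projK K z = (\<lambda>i. if i < K then z i else 0)"

definition vnorm :: "nat \<Rightarrow> (nat \<Rightarrow> complex) \<Rightarrow> real" where
  "vnorm N v = sqrt (\<Sum>n<N. (cmod (v n))\<^sup>2)"

definition Umat :: "(nat \<Rightarrow> 'a \<Rightarrow> complex) \<Rightarrow> (nat \<Rightarrow> real) \<Rightarrow> (nat \<Rightarrow> 'a) \<Rightarrow> nat \<Rightarrow> nat \<Rightarrow> complex" where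
  "Umat \<phi> \<tau> t n i = complex_of_real (sqrt (\<tau> n)) * \<phi> i (t n)"

definition Uop :: "(nat \<Rightarrow> 'a \<Rightarrow> complex) \<Rightarrow> (nat \<Rightarrow> real) \<Rightarrow> (nat \<Rightarrow> 'a) \<Rightarrow> nat \<Rightarrow> (nat \<Rightarrow> complex) \<Rightarrow> nat \<Rightarrow> complex" where
  "Uop \<phi> \<tau> t N v = (\<lambda>n. if n < N then (\<Sum>i. Umat \<phi> \<tau> t n i * v i) else 0)"

definition RanU :: "(nat \<Rightarrow> 'a \<Rightarrow> complex) \<Rightarrow> (nat \<Rightarrow> real) \<Rightarrow> (nat \<Rightarrow> 'a) \<Rightarrow> nat \<Rightarrow> (nat \<Rightarrow> real) \<Rightarrow> (nat \<Rightarrow> complex) set" where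
  "RanU \<phi> \<tau> t N w = Uop \<phi> \<tau> t N ` {v. in_l1w w v}"

definition RanUPK :: "(nat \<Rightarrow> 'a \<Rightarrow> complex) \<Rightarrow> (nat \<Rightarrow> real) \<Rightarrow> (nat \<Rightarrow> 'a) \<Rightarrow> nat \<Rightarrow> nat \<Rightarrow> (nat \<Rightarrow> complex) set" where
  "RanUPK \<phi> \<tau> t N K = (\<lambda>z. Uop \<phi> \<tau> t N (projK K z)) ` UNIV"

text \<open>sigma_min = inf over unit y' in C^N of the norm of (U P_K)^* y' in C^K.\<close>
definition sigma_min :: "(nat \<Rightarrow> 'a \<Rightarrow> complex) \<Rightarrow> (nat \<Rightarrow> real) \<Rightarrow> (nat \<Rightarrow> 'a) \<Rightarrow> nat \<Rightarrow> nat \<Rightarrow> real" where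
  "sigma_min \<phi> \<tau> t N K = Inf {sqrt (\<Sum>i<K. (cmod (\<Sum>n<N. cnj (Umat \<phi> \<tau> t n i) * y' n))\<^sup>2) | y'. vnorm N y' = 1}"

text \<open>T_{h,K,eta}(x): infimum of ||x - xbar||_{1,w} over xbar in C^K
  (embedded as sequences vanishing from index K on) with ||U P_K xbar - y|| <= eta.\<close>
definition Thk :: "(nat \<Rightarrow> 'a \<Rightarrow> complex) \<Rightarrow> (nat \<Rightarrow> real) \<Rightarrow> (nat \<Rightarrow> 'a) \<Rightarrow> nat \<Rightarrow> (nat \<Rightarrow> real)
     \<Rightarrow> (nat \<Rightarrow> complex) \<Rightarrow> nat \<Rightarrow> real \<Rightarrow> (nat \<Rightarrow> complex) \<Rightarrow> real" where
  "Thk \<phi> \<tau> t N w y K \<eta> x = Inf {norm1w w (x - xb) | xb.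
      (\<forall>i\<ge>K. xb i = 0) \<and> vnorm N (\<lambda>n. Uop \<phi> \<tau> t N xb n - y n) \<le> \<eta>}"

end

theory Submission
  imports Defs "HOL-Library.Function_Algebras"
begin

definition sc :: "complex \<Rightarrow> (nat \<Rightarrow> complex) \<Rightarrow> (nat \<Rightarrow> complex)" where
  "sc c f = (\<lambda>n. c * f n)"
interpretation FV: vector_space sc
  by unfold_locales (auto simp: sc_def fun_eq_iff algebra_simps)
interpretation CV: vector_space "(*) :: complex \<Rightarrow> complex \<Rightarrow> complex"
  by unfold_locales (auto simp: algebra_simps)
interpretation FC: vector_space_pair sc "(*) :: complex \<Rightarrow> complex \<Rightarrow> complex" ..

lemma fun_sum_apply: "(sum f A) x = (\<Sum>a\<in>A. f a x)"
  by (induct A rule: infinite_finite_induct) auto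

definition dlt :: "nat \<Rightarrow> nat \<Rightarrow> complex" where
  "dlt n = (\<lambda>m. if m = n then 1 else 0)"

lemma sep_span:
  assumes "\<And>g. Vector_Spaces.linear sc (*) g \<Longrightarrow> (\<forall>s\<in>S. g s = 0) \<Longrightarrow> g b = 0"
  shows "b \<in> FV.span S"
proof (rule ccontr)
  assume nb: "b \<notin> FV.span S"
  obtain B where B: "B \<subseteq> S" "FV.independent B" "S \<subseteq> FV.span B"
    using FV.maximal_independent_subset by blast
  have "FV.span B \<subseteq> FV.span S" using B(1) FV.span_mono by blast
  with nb have nbB: "b \<notin> FV.span B" by blast
  have ind: "FV.independent (insert b B)" using FV.independent_insertI[OF nbB B(2)] .
  obtain g where g: "Vector_Spaces.linear sc (*) g"
    "\<forall>x\<in>insert b B. g x = (if x = b then 1 else 0)"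
    using FC.linear_independent_extend[OF ind, of "\<lambda>x. if x = b then 1 else 0"] by blast
  have gB: "g x = 0" if "x \<in> B" for x
  proof -
    have "x \<noteq> b" using that nbB FV.span_base by blast
    with g(2) that show ?thesis by auto
  qed
  have "\<forall>s\<in>S. g s = 0"
  proof
    fix s assume "s \<in> S"
    hence "s \<in> FV.span B" using B(3) by blast
    from FC.linear_eq_on[OF g(1) FC.linear_zero this] gB show "g s = 0" by auto
  qed
  with assms g(1) have "g b = 0" by blast
  with g(2) show False by auto
qed

lemma lin_rep:
  assumes g: "Vector_Spaces.linear sc (*) g" and u: "\<forall>n\<ge>N. u n = 0"
  shows "g u = (\<Sum>n<N. u n * g (dlt n))"
proof -
  have "u x = (\<Sum>n<N. sc (u n) (dlt n)) x" for x
  proof -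
    have "(\<Sum>n<N. sc (u n) (dlt n)) x = (\<Sum>n<N. if x = n then u n else 0)"
      unfolding fun_sum_apply by (rule sum.cong) (auto simp: sc_def dlt_def)
    also have "\<dots> = (if x < N then u x else 0)" by (simp add: sum.delta)
    finally show ?thesis using u by (auto simp: not_less)
  qed
  hence "u = (\<Sum>n<N. sc (u n) (dlt n))" by (rule ext)
  hence "g u = g (\<Sum>n<N. sc (u n) (dlt n))" by simp
  also have "\<dots> = (\<Sum>n<N. u n * g (dlt n))"
    by (simp add: FC.linear_sum[OF g] FC.linear_scale[OF g])
  finally show ?thesis .
qed



locale setting =
  fixes \<phi> :: "nat \<Rightarrow> 'a \<Rightarrow> complex" and \<tau> :: "nat \<Rightarrow> real" and t :: "nat \<Rightarrow> 'a"
    and N :: nat and w :: "nat \<Rightarrow> real"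
  assumes tau_nn: "\<And>n. 0 \<le> \<tau> n" and tau_sum: "(\<Sum>n<N. \<tau> n) \<le> 1"
    and phib: "\<And>i n. n < N \<Longrightarrow> cmod (\<phi> i (t n)) \<le> w i"
    and w_pos: "\<And>i. 0 < w i"
begin

lemma cnj_mult_self: "cnj z * z = complex_of_real ((cmod z)\<^sup>2)"
  using complex_norm_square[of z] by (simp add: mult.commute)

abbreviation U where "U n i \<equiv> Umat \<phi> \<tau> t n i"

definition adj :: "nat \<Rightarrow> (nat \<Rightarrow> complex) \<Rightarrow> nat \<Rightarrow> complex" where
  "adj K y = (\<lambda>i. if i < K then (\<Sum>n<N. cnj (U n i) * y n) else 0)"

definition Af :: "nat \<Rightarrow> (nat \<Rightarrow> complex) \<Rightarrow> nat \<Rightarrow> complex" where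
  "Af K z = (\<lambda>n. if n < N then (\<Sum>i<K. U n i * z i) else 0)"

lemma adj_ident:
  "(\<Sum>n<N. cnj (y n) * Af K z n) = (\<Sum>i<K. cnj (adj K y i) * z i)"
proof -
  have "(\<Sum>n<N. cnj (y n) * Af K z n) = (\<Sum>n<N. \<Sum>i<K. cnj (y n) * U n i * z i)"
    by (simp add: Af_def sum_distrib_left mult.assoc)
  also have "\<dots> = (\<Sum>i<K. \<Sum>n<N. cnj (y n) * U n i * z i)" by (rule sum.swap)
  also have "\<dots> = (\<Sum>i<K. cnj (adj K y i) * z i)"
    by (simp add: adj_def sum_distrib_left sum_distrib_right mult_ac)
  finally show ?thesis .
qed

lemma vnorm_nn: "0 \<le> vnorm N v" by (simp add: vnorm_def sum_nonneg)

lemma vnorm_L2: "vnorm N v = L2_set (\<lambda>n. cmod (v n)) {..<N}"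
  by (simp add: vnorm_def L2_set_def)

definition nA :: "nat \<Rightarrow> (nat \<Rightarrow> complex) \<Rightarrow> real" where
  "nA K y = sqrt (\<Sum>i<K. (cmod (adj K y i))\<^sup>2)"

lemma sigma_bound:
  assumes "0 < N"
  shows "sigma_min \<phi> \<tau> t N K * vnorm N y \<le> nA K y"
proof (cases "vnorm N y = 0")
  case True thus ?thesis by (simp add: nA_def sum_nonneg)
next
  case False
  define c where "c = vnorm N y"
  have c: "0 < c" using False vnorm_nn c_def by (metis less_eq_real_def)
  define y' where "y' = (\<lambda>n. y n / complex_of_real c)"
  have "vnorm N y' = vnorm N y / c"
  proof -
    have "(\<Sum>n<N. (cmod (y' n))\<^sup>2) = (\<Sum>n<N. (cmod (y n))\<^sup>2) / c\<^sup>2"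
      using c by (simp add: y'_def norm_divide power_divide sum_divide_distrib)
    thus ?thesis using c by (simp add: vnorm_def real_sqrt_divide)
  qed
  hence y'1: "vnorm N y' = 1" using c c_def by simp
  have eq: "sqrt (\<Sum>i<K. (cmod (\<Sum>n<N. cnj (U n i) * y' n))\<^sup>2) = nA K y / c"
  proof -
    have "(\<Sum>i<K. (cmod (\<Sum>n<N. cnj (U n i) * y' n))\<^sup>2) = (\<Sum>i<K. (cmod (adj K y i))\<^sup>2) / c\<^sup>2"
      unfolding sum_divide_distrib
    proof (rule sum.cong)
      fix i assume "i \<in> {..<K}"
      have "(\<Sum>n<N. cnj (U n i) * y' n) = adj K y i / complex_of_real c"
        using \<open>i \<in> {..<K}\<close> by (simp add: y'_def adj_def sum_divide_distrib)
      thus "(cmod (\<Sum>n<N. cnj (U n i) * y' n))\<^sup>2 = (cmod (adj K y i))\<^sup>2 / c\<^sup>2"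
        using c by (simp add: norm_divide power_divide)
    qed simp
    thus ?thesis using c by (simp add: nA_def real_sqrt_divide)
  qed
  have "sigma_min \<phi> \<tau> t N K \<le> nA K y / c"
    unfolding sigma_min_def
    apply (rule cInf_lower)
    apply (rule CollectI, rule exI[of _ y'])
    using y'1 eq apply simp
    by (rule bdd_belowI[where m=0]) (auto simp: sum_nonneg)
  thus ?thesis using c c_def by (simp add: field_simps)
qed

lemma Af_adj_ident: "(\<Sum>n<N. cnj (y n) * Af K (adj K y) n) = of_real ((nA K y)\<^sup>2)"
proof -
  have "(\<Sum>n<N. cnj (y n) * Af K (adj K y) n) = (\<Sum>i<K. cnj (adj K y i) * adj K y i)"
    by (rule adj_ident)
  also have "\<dots> = (\<Sum>i<K. of_real ((cmod (adj K y i))\<^sup>2))"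
    by (rule sum.cong) (simp_all only: cnj_mult_self)
  also have "\<dots> = of_real ((nA K y)\<^sup>2)" by (simp add: nA_def sum_nonneg)
  finally show ?thesis .
qed

lemma M_surj:
  assumes N0: "0 < N" and sig: "0 < sigma_min \<phi> \<tau> t N K" and b: "\<forall>n\<ge>N. b n = 0"
  shows "\<exists>y. Af K (adj K y) = b"
proof -
  let ?M = "\<lambda>y. Af K (adj K y)"
  have sub: "FV.subspace (range ?M)"
    unfolding FV.subspace_def
  proof (intro conjI ballI allI)
    show "0 \<in> range ?M"
      by (rule image_eqI[of _ _ 0]) (auto simp: Af_def adj_def fun_eq_iff)
    fix u v assume "u \<in> range ?M" "v \<in> range ?M"
    then obtain yu yv where "u = ?M yu" "v = ?M yv" by auto
    thus "u + v \<in> range ?M"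
      by (intro image_eqI[of _ _ "yu + yv"])
         (auto simp: Af_def adj_def fun_eq_iff sum.distrib algebra_simps)
  next
    fix c u assume "u \<in> range ?M"
    then obtain yu where "u = ?M yu" by auto
    thus "sc c u \<in> range ?M"
      by (intro image_eqI[of _ _ "sc c yu"])
         (auto simp: Af_def adj_def fun_eq_iff sc_def sum_distrib_left algebra_simps)
  qed
  have "b \<in> FV.span (range ?M)"
  proof (rule sep_span)
    fix g assume g: "Vector_Spaces.linear sc (*) g" and g0: "\<forall>s\<in>range ?M. g s = 0"
    define a where "a = (\<lambda>n. if n < N then cnj (g (dlt n)) else 0)"
    have "g (?M a) = (\<Sum>n<N. ?M a n * g (dlt n))"
      by (rule lin_rep[OF g]) (auto simp: Af_def)
    also have "\<dots> = (\<Sum>n<N. cnj (a n) * ?M a n)"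
      by (rule sum.cong) (auto simp: a_def mult.commute)
    also have "\<dots> = of_real ((nA K a)\<^sup>2)" by (rule Af_adj_ident)
    finally have "nA K a = 0" using g0 by auto
    hence "vnorm N a = 0" using sigma_bound[OF N0, of K a] sig vnorm_nn[of a]
      by (simp add: mult_le_0_iff)
    hence "\<forall>n<N. a n = 0" unfolding vnorm_def by (simp add: sum_nonneg_eq_0_iff)
    hence gd: "\<forall>n<N. g (dlt n) = 0" by (auto simp: a_def)
    show "g b = 0" using lin_rep[OF g b] gd by simp
  qed
  hence "b \<in> range ?M" using FV.span_minimal[OF order_refl sub] by blast
  thus ?thesis by auto
qed

lemma solve_bound:
  assumes N0: "0 < N" and sig: "0 < sigma_min \<phi> \<tau> t N K" and b: "\<forall>n\<ge>N. b n = 0"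
  shows "\<exists>z. (\<forall>i\<ge>K. z i = 0) \<and> Af K z = b \<and>
     sigma_min \<phi> \<tau> t N K * sqrt (\<Sum>i<K. (cmod (z i))\<^sup>2) \<le> vnorm N b"
proof -
  obtain y where y: "Af K (adj K y) = b" using M_surj[OF N0 sig b] by blast
  let ?s = "sigma_min \<phi> \<tau> t N K"
  have e: "of_real ((nA K y)\<^sup>2) = (\<Sum>n<N. cnj (y n) * b n)"
    using Af_adj_ident[of y K] y by simp
  have "(nA K y)\<^sup>2 = Re (\<Sum>n<N. cnj (y n) * b n)" using arg_cong[OF e, of Re] by simp
  also have "\<dots> \<le> cmod (\<Sum>n<N. cnj (y n) * b n)" by (rule complex_Re_le_cmod)
  also have "\<dots> \<le> (\<Sum>n<N. cmod (cnj (y n) * b n))" by (rule norm_sum)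
  also have "\<dots> = (\<Sum>n<N. \<bar>cmod (y n)\<bar> * \<bar>cmod (b n)\<bar>)" by (simp add: norm_mult)
  also have "\<dots> \<le> vnorm N y * vnorm N b" unfolding vnorm_L2 by (rule L2_set_mult_ineq)
  finally have 1: "(nA K y)\<^sup>2 \<le> vnorm N y * vnorm N b" .
  have 2: "?s * vnorm N y \<le> nA K y" by (rule sigma_bound[OF N0])
  have nn: "0 \<le> nA K y" by (simp add: nA_def sum_nonneg)
  have "?s * nA K y \<le> vnorm N b"
  proof (cases "nA K y = 0")
    case True thus ?thesis by (simp add: vnorm_nn)
  next
    case False
    hence pos: "0 < nA K y" using nn by simp
    have "?s * (nA K y)\<^sup>2 \<le> ?s * (vnorm N y * vnorm N b)"
      using 1 sig by (simp add: mult_left_mono)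
    also have "\<dots> = (?s * vnorm N y) * vnorm N b" by simp
    also have "\<dots> \<le> nA K y * vnorm N b" using 2 vnorm_nn by (simp add: mult_right_mono)
    finally have "nA K y * (?s * nA K y) \<le> nA K y * vnorm N b"
      by (simp add: power2_eq_square mult_ac)
    thus ?thesis using pos by simp
  qed
  moreover have "\<forall>i\<ge>K. adj K y i = 0" by (simp add: adj_def)
  ultimately show ?thesis using y unfolding nA_def by blast
qed

end


context setting begin

lemma U_bound: "n < N \<Longrightarrow> cmod (U n i) \<le> sqrt (\<tau> n) * w i"
  unfolding Umat_def using phib[of n i] tau_nn[of n]
  by (simp add: norm_mult mult_left_mono)

lemma norm1w_nn: "in_l1w w v \<Longrightarrow> 0 \<le> norm1w w v"
  unfolding norm1w_def in_l1w_def
  by (rule suminf_nonneg) (auto intro: mult_nonneg_nonneg less_imp_le[OF w_pos])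

lemma U_summable:
  assumes v: "in_l1w w v" and n: "n < N"
  shows "summable (\<lambda>i. norm (U n i * v i))"
    and "cmod (\<Sum>i. U n i * v i) \<le> sqrt (\<tau> n) * norm1w w v"
proof -
  have le: "norm (U n i * v i) \<le> sqrt (\<tau> n) * (w i * cmod (v i))" for i
    using mult_right_mono[OF U_bound[OF n, of i] norm_ge_zero[of "v i"]] by (simp add: norm_mult mult.assoc)
  have s2: "summable (\<lambda>i. sqrt (\<tau> n) * (w i * cmod (v i)))"
    using v unfolding in_l1w_def by (rule summable_mult)
  show s1: "summable (\<lambda>i. norm (U n i * v i))"
    by (rule summable_comparison_test'[OF s2]) (use le in auto)
  have "cmod (\<Sum>i. U n i * v i) \<le> (\<Sum>i. norm (U n i * v i))" by (rule summable_norm[OF s1])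
  also have "\<dots> \<le> (\<Sum>i. sqrt (\<tau> n) * (w i * cmod (v i)))" by (rule suminf_le[OF le s1 s2])
  also have "\<dots> = sqrt (\<tau> n) * norm1w w v"
    using v unfolding in_l1w_def norm1w_def by (rule suminf_mult)
  finally show "cmod (\<Sum>i. U n i * v i) \<le> sqrt (\<tau> n) * norm1w w v" .
qed

lemma vnorm_bound:
  assumes M: "0 \<le> M" and u: "\<And>n. n < N \<Longrightarrow> cmod (u n) \<le> sqrt (\<tau> n) * M"
  shows "vnorm N u \<le> M"
proof -
  have "(\<Sum>n<N. (cmod (u n))\<^sup>2) \<le> (\<Sum>n<N. (sqrt (\<tau> n) * M)\<^sup>2)"
    by (rule sum_mono, rule power_mono) (use u in auto)
  also have "\<dots> = (\<Sum>n<N. \<tau> n) * M\<^sup>2"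
    by (simp add: power_mult_distrib tau_nn sum_distrib_right)
  also have "\<dots> \<le> 1 * M\<^sup>2" by (rule mult_right_mono[OF tau_sum]) simp
  finally have "(\<Sum>n<N. (cmod (u n))\<^sup>2) \<le> M\<^sup>2" by simp
  hence "sqrt (\<Sum>n<N. (cmod (u n))\<^sup>2) \<le> sqrt (M\<^sup>2)" by (rule real_sqrt_le_mono)
  thus ?thesis using M by (simp add: vnorm_def)
qed

lemma Uop_vnorm: "in_l1w w v \<Longrightarrow> vnorm N (Uop \<phi> \<tau> t N v) \<le> norm1w w v"
  by (rule vnorm_bound) (auto simp: Uop_def norm1w_nn U_summable(2))

lemma Uop_fin:
  assumes z: "\<forall>i\<ge>K. z i = 0"
  shows "Uop \<phi> \<tau> t N z = Af K z"
  unfolding Uop_def Af_def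
proof (rule ext)
  fix n
  have "(\<Sum>i. U n i * z i) = (\<Sum>i<K. U n i * z i)"
    by (rule suminf_finite) (use z in \<open>auto simp: not_less\<close>)
  thus "(if n < N then \<Sum>i. U n i * z i else 0) = (if n < N then \<Sum>i<K. U n i * z i else 0)"
    by simp
qed

lemma fin_l1:
  assumes "\<forall>i\<ge>K. z i = 0"
  shows "in_l1w w z" and "norm1w w z = (\<Sum>i<K. w i * cmod (z i))"
proof -
  show "in_l1w w z" unfolding in_l1w_def
    by (rule summable_finite[of "{..<K}"]) (use assms in auto)
  show "norm1w w z = (\<Sum>i<K. w i * cmod (z i))" unfolding norm1w_def
    by (rule suminf_finite) (use assms in auto)
qed

lemma l1_add:
  assumes "in_l1w w a" "in_l1w w b"
  shows "in_l1w w (a + b)" "in_l1w w (a - b)"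
    and "norm1w w (a - b) \<le> norm1w w a + norm1w w b"
proof -
  have s: "summable (\<lambda>i. w i * cmod (a i) + w i * cmod (b i))"
    using assms unfolding in_l1w_def by (rule summable_add)
  have le1: "norm (w i * cmod ((a + b) i)) \<le> w i * cmod (a i) + w i * cmod (b i)" for i
    using w_pos[of i] norm_triangle_ineq[of "a i" "b i"]
    by (simp add: abs_mult distrib_left[symmetric] mult_left_mono)
  have le2': "w i * cmod ((a - b) i) \<le> w i * cmod (a i) + w i * cmod (b i)" for i
    using w_pos[of i] norm_triangle_ineq4[of "a i" "b i"]
    by (simp add: distrib_left[symmetric] mult_left_mono)
  have le2: "norm (w i * cmod ((a - b) i)) \<le> w i * cmod (a i) + w i * cmod (b i)" for i
    using le2'[of i] w_pos[of i] by (simp add: abs_mult)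
  show "in_l1w w (a + b)" unfolding in_l1w_def
    by (rule summable_comparison_test'[OF s]) (use le1 in auto)
  show s2: "in_l1w w (a - b)" unfolding in_l1w_def
    by (rule summable_comparison_test'[OF s]) (use le2 in auto)
  have "norm1w w (a - b) \<le> (\<Sum>i. w i * cmod (a i) + w i * cmod (b i))"
    unfolding norm1w_def
    by (rule suminf_le[OF _ s2[unfolded in_l1w_def] s]) (rule le2')
  also have "\<dots> = norm1w w a + norm1w w b"
    using assms unfolding in_l1w_def norm1w_def by (rule suminf_add[symmetric])
  finally show "norm1w w (a - b) \<le> norm1w w a + norm1w w b" .
qed

lemma Uop_add:
  assumes "in_l1w w a" "in_l1w w b"
  shows "Uop \<phi> \<tau> t N (a + b) = Uop \<phi> \<tau> t N a + Uop \<phi> \<tau> t N b"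
proof (rule ext)
  fix n show "Uop \<phi> \<tau> t N (a + b) n = (Uop \<phi> \<tau> t N a + Uop \<phi> \<tau> t N b) n"
  proof (cases "n < N")
    case True
    have sa: "summable (\<lambda>i. U n i * a i)"
      by (rule summable_norm_cancel[OF U_summable(1)[OF assms(1) True]])
    have sb: "summable (\<lambda>i. U n i * b i)"
      by (rule summable_norm_cancel[OF U_summable(1)[OF assms(2) True]])
    show ?thesis using True suminf_add[OF sa sb]
      by (simp add: Uop_def distrib_left)
  qed (simp add: Uop_def)
qed

end


context setting begin

lemma Af_add: "Af K (p + z) = Af K p + Af K z"
  by (auto simp: Af_def fun_eq_iff sum.distrib distrib_left)

lemma projK_supp: "\<forall>i\<ge>K. projK K x i = 0" by (simp add: projK_def)

lemma T_main:
  assumes N0: "0 < N" and sig: "0 < sigma_min \<phi> \<tau> t N K" and x: "in_l1w w x"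
    and feas: "vnorm N (\<lambda>n. Uop \<phi> \<tau> t N x n - y n) \<le> \<eta>"
  shows "Thk \<phi> \<tau> t N w y K \<eta> x \<le> norm1w w (x - projK K x)
     + sqrt (\<Sum>i<K. (w i)\<^sup>2) * (vnorm N (Uop \<phi> \<tau> t N (x - projK K x)) / sigma_min \<phi> \<tau> t N K)"
proof -
  let ?s = "sigma_min \<phi> \<tau> t N K"
  define p where "p = projK K x"
  define r where "r = x - p"
  have p1: "in_l1w w p" unfolding p_def by (rule fin_l1(1)[OF projK_supp])
  have r1: "in_l1w w r" unfolding r_def by (rule l1_add(2)[OF x p1])
  define b where "b = Uop \<phi> \<tau> t N r"
  have bN: "\<forall>n\<ge>N. b n = 0" by (simp add: b_def Uop_def)
  obtain z where z: "\<forall>i\<ge>K. z i = 0" "Af K z = b"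
    "?s * sqrt (\<Sum>i<K. (cmod (z i))\<^sup>2) \<le> vnorm N b"
    using solve_bound[OF N0 sig bN] by blast
  define xb where "xb = p + z"
  have xbs: "\<forall>i\<ge>K. xb i = 0" using z(1) by (simp add: xb_def p_def projK_def)
  have "Uop \<phi> \<tau> t N xb = Af K xb" by (rule Uop_fin[OF xbs])
  also have "\<dots> = Af K p + Af K z" unfolding xb_def by (rule Af_add)
  also have "\<dots> = Uop \<phi> \<tau> t N p + Uop \<phi> \<tau> t N r"
    using Uop_fin[OF projK_supp[of K x]] z(2) by (simp add: p_def b_def)
  also have "\<dots> = Uop \<phi> \<tau> t N (p + r)" by (rule Uop_add[OF p1 r1, symmetric])
  also have "p + r = x" by (simp add: r_def)
  finally have Uxb: "Uop \<phi> \<tau> t N xb = Uop \<phi> \<tau> t N x" .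
  have z1: "in_l1w w z" by (rule fin_l1(1)[OF z(1)])
  have xd: "x - xb = r - z" by (simp add: xb_def r_def)
  have n1: "norm1w w (x - xb) \<le> norm1w w r + norm1w w z"
    unfolding xd by (rule l1_add(3)[OF r1 z1])
  have "norm1w w z = (\<Sum>i<K. \<bar>w i\<bar> * \<bar>cmod (z i)\<bar>)"
    using fin_l1(2)[OF z(1)] w_pos by (simp add: abs_of_pos)
  also have "\<dots> \<le> L2_set w {..<K} * L2_set (\<lambda>i. cmod (z i)) {..<K}"
    by (rule L2_set_mult_ineq)
  also have "\<dots> \<le> L2_set w {..<K} * (vnorm N b / ?s)"
  proof (rule mult_left_mono)
    show "L2_set (\<lambda>i. cmod (z i)) {..<K} \<le> vnorm N b / ?s"
      using z(3) sig by (simp add: L2_set_def field_simps)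
  qed (simp add: L2_set_def sum_nonneg)
  finally have n2: "norm1w w z \<le> L2_set w {..<K} * (vnorm N b / ?s)" .
  have bnd: "norm1w w (x - xb) \<le> norm1w w r + L2_set w {..<K} * (vnorm N b / ?s)"
    using n1 n2 by linarith
  have "Thk \<phi> \<tau> t N w y K \<eta> x \<le> norm1w w (x - xb)"
    unfolding Thk_def
  proof (rule cInf_lower)
    show "norm1w w (x - xb) \<in> {norm1w w (x - xb) |xb. (\<forall>i\<ge>K. xb i = 0) \<and>
          vnorm N (\<lambda>n. Uop \<phi> \<tau> t N xb n - y n) \<le> \<eta>}"
      using xbs Uxb feas by auto
    show "bdd_below {norm1w w (x - xb) |xb. (\<forall>i\<ge>K. xb i = 0) \<and>
          vnorm N (\<lambda>n. Uop \<phi> \<tau> t N xb n - y n) \<le> \<eta>}"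
    proof (rule bdd_belowI[where m=0])
      fix v assume "v \<in> {norm1w w (x - xb) |xb. (\<forall>i\<ge>K. xb i = 0) \<and>
          vnorm N (\<lambda>n. Uop \<phi> \<tau> t N xb n - y n) \<le> \<eta>}"
      then obtain xb' where "v = norm1w w (x - xb')" "\<forall>i\<ge>K. xb' i = 0" by auto
      thus "0 \<le> v" using norm1w_nn l1_add(2)[OF x fin_l1(1)] by auto
    qed
  qed
  from this bnd have "Thk \<phi> \<tau> t N w y K \<eta> x \<le> norm1w w r + L2_set w {..<K} * (vnorm N b / ?s)"
    by (rule order_trans)
  thus ?thesis unfolding L2_set_def r_def p_def b_def .
qed

lemma T_bound1:
  assumes N0: "0 < N" and sig: "0 < sigma_min \<phi> \<tau> t N K" and x: "in_l1w w x"
    and feas: "vnorm N (\<lambda>n. Uop \<phi> \<tau> t N x n - y n) \<le> \<eta>"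
  shows "Thk \<phi> \<tau> t N w y K \<eta> x \<le> norm1w w (x - projK K x)
     + sqrt (\<Sum>i<K. (w i)\<^sup>2) / sigma_min \<phi> \<tau> t N K * norm1w w (x - projK K x)"
proof -
  let ?s = "sigma_min \<phi> \<tau> t N K"
  let ?r = "x - projK K x"
  have r1: "in_l1w w ?r" by (rule l1_add(2)[OF x fin_l1(1)[OF projK_supp]])
  have "vnorm N (Uop \<phi> \<tau> t N ?r) / ?s \<le> norm1w w ?r / ?s"
    using Uop_vnorm[OF r1] sig by (simp add: divide_right_mono)
  hence "sqrt (\<Sum>i<K. (w i)\<^sup>2) * (vnorm N (Uop \<phi> \<tau> t N ?r) / ?s)
      \<le> sqrt (\<Sum>i<K. (w i)\<^sup>2) * (norm1w w ?r / ?s)"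
    by (rule mult_left_mono) (simp add: sum_nonneg)
  with T_main[OF N0 sig x feas] show ?thesis by simp
qed

lemma wt_l1:
  assumes m: "mono w" and wt: "\<forall>i. sqrt (real (i + 1)) * (w i)\<^sup>2 \<le> wt i" and x: "in_l1w wt x"
  shows "in_l1w w x"
proof -
  have le: "w i \<le> wt i / w 0" for i
  proof -
    have w0: "0 < w 0" by (rule w_pos)
    have "w 0 \<le> w i" using m by (simp add: mono_def)
    hence "w 0 * w i \<le> w i * w i" using w_pos[of i] by (simp add: mult_right_mono)
    also have "\<dots> \<le> sqrt (real (i + 1)) * (w i)\<^sup>2"
      by (simp add: power2_eq_square mult_le_cancel_right1)
    also have "\<dots> \<le> wt i" using wt by blast
    finally show ?thesis using w0 by (simp add: field_simps)
  qed
  have s: "summable (\<lambda>i. wt i * cmod (x i) / w 0)"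
    using x unfolding in_l1w_def by (rule summable_divide)
  show ?thesis unfolding in_l1w_def
  proof (rule summable_comparison_test'[OF s])
    fix i
    have "w i * cmod (x i) \<le> wt i / w 0 * cmod (x i)" by (rule mult_right_mono[OF le]) simp
    thus "norm (w i * cmod (x i)) \<le> wt i * cmod (x i) / w 0" using w_pos[of i] by simp
  qed
qed

lemma T_bound2:
  assumes N0: "0 < N" and sig: "0 < sigma_min \<phi> \<tau> t N K"
    and m: "mono w" and wt: "\<forall>i. sqrt (real (i + 1)) * (w i)\<^sup>2 \<le> wt i" and xt: "in_l1w wt x"
    and feas: "vnorm N (\<lambda>n. Uop \<phi> \<tau> t N x n - y n) \<le> \<eta>"
  shows "Thk \<phi> \<tau> t N w y K \<eta> x \<le> norm1w w (x - projK K x)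
     + 1 / sigma_min \<phi> \<tau> t N K * norm1w wt (x - projK K x)"
proof -
  let ?s = "sigma_min \<phi> \<tau> t N K"
  let ?r = "x - projK K x"
  let ?C = "sqrt (\<Sum>i<K. (w i)\<^sup>2)"
  have x: "in_l1w w x" by (rule wt_l1[OF m wt xt])
  have r1: "in_l1w w ?r" by (rule l1_add(2)[OF x fin_l1(1)[OF projK_supp]])
  have rt: "summable (\<lambda>i. wt i * cmod (?r i))"
  proof (rule summable_comparison_test'[OF xt[unfolded in_l1w_def]])
    fix i
    have "0 \<le> sqrt (real (i + 1)) * (w i)\<^sup>2" by simp
    hence "0 \<le> wt i" using wt[rule_format, of i] by linarith
    thus "norm (wt i * cmod (?r i)) \<le> wt i * cmod (x i)"
      by (simp add: projK_def abs_mult)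
  qed
  have pt: "?C * (w i * cmod (?r i)) \<le> wt i * cmod (?r i)" for i
  proof (cases "i < K")
    case True thus ?thesis by (simp add: projK_def)
  next
    case False
    have "(\<Sum>j<K. (w j)\<^sup>2) \<le> (\<Sum>j<K. (w i)\<^sup>2)"
    proof (rule sum_mono)
      fix j assume "j \<in> {..<K}"
      hence "w j \<le> w i" using False m by (simp add: mono_def)
      thus "(w j)\<^sup>2 \<le> (w i)\<^sup>2" using w_pos[of j] by (simp add: power_mono)
    qed
    also have "\<dots> = real K * (w i)\<^sup>2" by simp
    also have "\<dots> \<le> real (i + 1) * (w i)\<^sup>2" using False by (simp add: mult_right_mono)
    finally have "?C \<le> sqrt (real (i + 1) * (w i)\<^sup>2)" by (rule real_sqrt_le_mono)
    also have "\<dots> = sqrt (real (i + 1)) * w i" using w_pos[of i] by (simp add: real_sqrt_mult)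
    finally have "?C * (w i * cmod (?r i)) \<le> sqrt (real (i + 1)) * w i * (w i * cmod (?r i))"
      by (rule mult_right_mono) (use w_pos[of i] in simp)
    also have "\<dots> = sqrt (real (i + 1)) * (w i)\<^sup>2 * cmod (?r i)" by (simp add: power2_eq_square)
    also have "\<dots> \<le> wt i * cmod (?r i)" by (rule mult_right_mono) (use wt in auto)
    finally show ?thesis .
  qed
  have "?C * vnorm N (Uop \<phi> \<tau> t N ?r) \<le> ?C * norm1w w ?r"
    by (rule mult_left_mono[OF Uop_vnorm[OF r1]]) (simp add: sum_nonneg)
  also have "\<dots> = (\<Sum>i. ?C * (w i * cmod (?r i)))"
    unfolding norm1w_def using r1[unfolded in_l1w_def] by (rule suminf_mult[symmetric])
  also have "\<dots> \<le> norm1w wt ?r" unfolding norm1w_def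
    by (rule suminf_le[OF pt summable_mult[OF r1[unfolded in_l1w_def]] rt])
  finally have "?C * vnorm N (Uop \<phi> \<tau> t N ?r) \<le> norm1w wt ?r" .
  hence "?C * (vnorm N (Uop \<phi> \<tau> t N ?r) / ?s) \<le> 1 / ?s * norm1w wt ?r"
    using sig by (simp add: divide_right_mono)
  with T_main[OF N0 sig x feas] show ?thesis by linarith
qed

end


lemma cont_coord [continuous_intros]: "continuous_on S (\<lambda>x::nat \<Rightarrow> 'b::topological_space. x i)"
  by (rule continuous_on_subset[OF continuous_on_product_coordinates]) simp

lemma compact_box: "compact (Pi\<^sub>E UNIV (\<lambda>i. if i < K then cball (0::complex) R else {0}))"
proof -
  have "compactin (product_topology (\<lambda>i. euclidean) UNIV)
          (Pi\<^sub>E UNIV (\<lambda>i. if i < K then cball (0::complex) R else {0}))"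
    unfolding compactin_PiE by (auto simp: compactin_euclidean_iff)
  thus ?thesis by (simp add: euclidean_product_topology compactin_euclidean_iff)
qed

lemma min_exists:
  fixes S :: "(nat \<Rightarrow> complex) set" and w :: "nat \<Rightarrow> real"
  assumes cl: "closed S" and sub: "\<And>z. z \<in> S \<Longrightarrow> \<forall>i\<ge>K. z i = 0" and z0: "z0 \<in> S"
    and wp: "\<And>i. 0 < w i"
  shows "\<exists>z\<in>S. \<forall>z'\<in>S. (\<Sum>i<K. w i * cmod (z i)) \<le> (\<Sum>i<K. w i * cmod (z' i))"
proof (cases "K = 0")
  case True thus ?thesis using z0 by auto
next
  case False
  define h where "h = (\<lambda>z::nat \<Rightarrow> complex. \<Sum>i<K. w i * cmod (z i))"
  define m where "m = Min (w ` {..<K})"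
  have m: "0 < m" unfolding m_def using False wp by (subst Min_gr_iff) auto
  have mle: "m \<le> w i" if "i < K" for i unfolding m_def using that by (intro Min_le) auto
  have hnn: "0 \<le> h z" for z unfolding h_def using wp by (intro sum_nonneg) (simp add: less_imp_le)
  have hterm: "w i * cmod (z i) \<le> h z" if "i < K" for i z
    unfolding h_def using that wp by (intro member_le_sum) (auto simp: less_imp_le)
  define R where "R = h z0 / m"
  define Bx where "Bx = Pi\<^sub>E UNIV (\<lambda>i. if i < K then cball (0::complex) R else {0})"
  have cC: "compact (S \<inter> Bx)" unfolding Bx_def
    using compact_Int_closed[OF compact_box cl] by (simp add: Int_commute)
  have z0B: "z0 \<in> Bx"
  proof -
    have "cmod (z0 i) \<le> R" if "i < K" for i
    proof -
      have "m * cmod (z0 i) \<le> w i * cmod (z0 i)" using mle[OF that] by (simp add: mult_right_mono)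
      also have "\<dots> \<le> h z0" by (rule hterm[OF that])
      finally show ?thesis using m by (simp add: R_def field_simps)
    qed
    thus ?thesis using sub[OF z0] by (auto simp: Bx_def not_less)
  qed
  have "continuous_on (S \<inter> Bx) h" unfolding h_def by (intro continuous_intros)
  then obtain z where z: "z \<in> S \<inter> Bx" "\<forall>z'\<in>S \<inter> Bx. h z \<le> h z'"
    using continuous_attains_inf[OF cC] z0 z0B by blast
  have "\<forall>z'\<in>S. h z \<le> h z'"
  proof
    fix z' assume z'S: "z' \<in> S"
    show "h z \<le> h z'"
    proof (cases "z' \<in> Bx")
      case True thus ?thesis using z z'S by blast
    next
      case False
      then obtain i where i: "i < K" "cmod (z' i) > R"
        using sub[OF z'S] by (auto simp: Bx_def not_less) (meson not_less)
      have "h z \<le> h z0" using z z0 z0B by blast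
      also have "\<dots> = m * R" using m by (simp add: R_def)
      also have "\<dots> \<le> w i * R" by (rule mult_right_mono[OF mle[OF i(1)]]) (use m hnn[of z0] in \<open>simp add: R_def\<close>)
      also have "\<dots> < w i * cmod (z' i)" using i wp[of i] by simp
      also have "\<dots> \<le> h z'" by (rule hterm[OF i(1)])
      finally show ?thesis by simp
    qed
  qed
  thus ?thesis using z unfolding h_def by blast
qed

lemma supp_in_span:
  assumes "\<forall>n\<ge>N. u n = 0"
  shows "u \<in> FV.span (dlt ` {..<N})"
proof -
  have "u x = (\<Sum>n<N. sc (u n) (dlt n)) x" for x
  proof -
    have "(\<Sum>n<N. sc (u n) (dlt n)) x = (\<Sum>n<N. if x = n then u n else 0)"
      unfolding fun_sum_apply by (rule sum.cong) (auto simp: sc_def dlt_def)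
    also have "\<dots> = (if x < N then u x else 0)" by (simp add: sum.delta)
    finally show ?thesis using assms by (auto simp: not_less)
  qed
  hence "u = (\<Sum>n<N. sc (u n) (dlt n))" by (rule ext)
  also have "\<dots> \<in> FV.span (dlt ` {..<N})"
    by (intro FV.span_sum FV.span_scale FV.span_base) auto
  finally show ?thesis .
qed

context setting begin

definition col :: "nat \<Rightarrow> nat \<Rightarrow> complex" where
  "col i = (\<lambda>n. if n < N then U n i else 0)"

lemma Af_proj: "Af K (projK K z) = Af K z"
  by (auto simp: Af_def projK_def fun_eq_iff)

lemma RanUPK_eq: "RanUPK \<phi> \<tau> t N K = range (Af K)"
proof -
  have "RanUPK \<phi> \<tau> t N K = (\<lambda>z. Af K (projK K z)) ` UNIV"
    unfolding RanUPK_def by (simp add: Uop_fin[OF projK_supp])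
  thus ?thesis by (simp add: Af_proj)
qed

lemma range_Af_subspace: "FV.subspace (range (Af K))"
  unfolding FV.subspace_def
proof (intro conjI ballI allI)
  show "0 \<in> range (Af K)" by (rule image_eqI[of _ _ 0]) (auto simp: Af_def fun_eq_iff)
  fix u v assume "u \<in> range (Af K)" "v \<in> range (Af K)"
  then obtain a b where "u = Af K a" "v = Af K b" by auto
  thus "u + v \<in> range (Af K)" by (intro image_eqI[of _ _ "a + b"]) (simp_all add: Af_add)
next
  fix c u assume "u \<in> range (Af K)"
  then obtain a where "u = Af K a" by auto
  thus "sc c u \<in> range (Af K)"
    by (intro image_eqI[of _ _ "sc c a"])
       (auto simp: Af_def fun_eq_iff sc_def sum_distrib_left algebra_simps)
qed

lemma col_in: "i < K \<Longrightarrow> col i \<in> range (Af K)"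
  by (rule image_eqI[of _ _ "dlt i"])
     (auto simp: Af_def col_def dlt_def fun_eq_iff if_distrib sum.delta cong: if_cong)

lemma RanU_span: "in_l1w w v \<Longrightarrow> Uop \<phi> \<tau> t N v \<in> FV.span (range col)"
proof (rule sep_span)
  fix g assume g: "Vector_Spaces.linear sc (*) g" and g0: "\<forall>s\<in>range col. g s = 0"
  assume v: "in_l1w w v"
  have gc: "(\<Sum>n<N. U n i * g (dlt n)) = 0" for i
  proof -
    have "g (col i) = (\<Sum>n<N. col i n * g (dlt n))" by (rule lin_rep[OF g]) (simp add: col_def)
    also have "\<dots> = (\<Sum>n<N. U n i * g (dlt n))" by (rule sum.cong) (auto simp: col_def)
    finally show ?thesis using g0 by simp
  qed
  have sm: "summable (\<lambda>i. U n i * v i * g (dlt n))" if "n \<in> {..<N}" for n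
    using summable_mult2[OF summable_norm_cancel[OF U_summable(1)[OF v]]] that by auto
  have "g (Uop \<phi> \<tau> t N v) = (\<Sum>n<N. Uop \<phi> \<tau> t N v n * g (dlt n))"
    by (rule lin_rep[OF g]) (simp add: Uop_def)
  also have "\<dots> = (\<Sum>n<N. (\<Sum>i. U n i * v i * g (dlt n)))"
  proof (rule sum.cong)
    fix n assume n: "n \<in> {..<N}"
    have "summable (\<lambda>i. U n i * v i)"
      using summable_norm_cancel[OF U_summable(1)[OF v]] n by auto
    thus "Uop \<phi> \<tau> t N v n * g (dlt n) = (\<Sum>i. U n i * v i * g (dlt n))"
      using n by (simp add: Uop_def suminf_mult2)
  qed simp
  also have "\<dots> = (\<Sum>i. \<Sum>n<N. U n i * v i * g (dlt n))" by (rule suminf_sum[OF sm, symmetric])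
  also have "\<dots> = (\<Sum>i. v i * (\<Sum>n<N. U n i * g (dlt n)))"
    by (simp add: sum_distrib_left mult_ac)
  also have "\<dots> = 0" by (simp add: gc)
  finally show "g (Uop \<phi> \<tau> t N v) = 0" .
qed

lemma ran_stab: "\<exists>K0. \<forall>K\<ge>K0. RanU \<phi> \<tau> t N w = RanUPK \<phi> \<tau> t N K"
proof -
  obtain B where B: "B \<subseteq> range col" "FV.independent B" "range col \<subseteq> FV.span B"
    using FV.maximal_independent_subset by blast
  have Bs: "B \<subseteq> FV.span (dlt ` {..<N})"
  proof
    fix b assume "b \<in> B"
    then obtain i where "b = col i" using B(1) by auto
    thus "b \<in> FV.span (dlt ` {..<N})" by (intro supp_in_span) (simp add: col_def)
  qed
  have fD: "finite (dlt ` {..<N})" by simp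
  have fB: "finite B" using FV.independent_span_bound[OF fD B(2) Bs] by (rule conjunct1)
  define ix where "ix = (\<lambda>b. SOME i. b = col i)"
  have ix: "b = col (ix b)" if "b \<in> B" for b
  proof -
    have "\<exists>i. b = col i" using B(1) that by auto
    thus ?thesis unfolding ix_def by (rule someI_ex)
  qed
  have "finite (ix ` B)" using fB by simp
  then obtain K0 where K0: "ix ` B \<subseteq> {..<K0}" using finite_nat_iff_bounded by blast
  have "RanU \<phi> \<tau> t N w = RanUPK \<phi> \<tau> t N K" if K: "K \<ge> K0" for K
  proof
    show "RanU \<phi> \<tau> t N w \<subseteq> RanUPK \<phi> \<tau> t N K"
    proof
      fix u assume "u \<in> RanU \<phi> \<tau> t N w"
      then obtain v where v: "in_l1w w v" "u = Uop \<phi> \<tau> t N v" by (auto simp: RanU_def)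
      have "FV.span (range col) \<subseteq> FV.span B"
        using FV.span_minimal[OF B(3) FV.subspace_span] .
      moreover have "B \<subseteq> range (Af K)"
      proof
        fix b assume b: "b \<in> B"
        have "ix b < K" using K0 b K by auto
        thus "b \<in> range (Af K)" by (subst ix[OF b]) (rule col_in)
      qed
      hence "FV.span B \<subseteq> range (Af K)" by (rule FV.span_minimal[OF _ range_Af_subspace])
      ultimately have "FV.span (range col) \<subseteq> range (Af K)" by (rule order_trans)
      hence "u \<in> range (Af K)" using RanU_span[OF v(1)] v(2) by auto
      thus "u \<in> RanUPK \<phi> \<tau> t N K" by (simp add: RanUPK_eq)
    qed
  next
    show "RanUPK \<phi> \<tau> t N K \<subseteq> RanU \<phi> \<tau> t N w"
    proof
      fix u assume "u \<in> RanUPK \<phi> \<tau> t N K"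
      then obtain z where "u = Uop \<phi> \<tau> t N (projK K z)" by (auto simp: RanUPK_def)
      moreover have "projK K z \<in> {v. in_l1w w v}" using fin_l1(1)[OF projK_supp] by simp
      ultimately show "u \<in> RanU \<phi> \<tau> t N w" unfolding RanU_def by (rule image_eqI)
    qed
  qed
  thus ?thesis by blast
qed

end


lemma closed_supp: "closed {z::nat \<Rightarrow> complex. \<forall>i. K \<le> i \<longrightarrow> z i = 0}"
proof (rule closed_Collect_all)
  fix i show "closed {z::nat \<Rightarrow> complex. K \<le> i \<longrightarrow> z i = 0}"
  proof (cases "K \<le> i")
    case True thus ?thesis
      using closed_Collect_eq[OF continuous_on_product_coordinates continuous_on_const, of i 0] by simp
  qed simp
qed

context setting begin

lemma closed_Af: "closed {z. \<forall>n. Af K z n = y n}"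
proof (rule closed_Collect_all)
  fix n show "closed {z. Af K z n = y n}"
  proof (cases "n < N")
    case True
    have "closed {z. (\<Sum>i<K. U n i * z i) = y n}"
      by (rule closed_Collect_eq) (intro continuous_intros)+
    thus ?thesis using True by (simp add: Af_def)
  next
    case False thus ?thesis by (simp add: Af_def)
  qed
qed

lemma closed_vn: "closed {z. vnorm N (\<lambda>n. Af K z n - y n) \<le> \<eta>}"
proof -
  have eq: "vnorm N (\<lambda>n. Af K z n - y n) = sqrt (\<Sum>n<N. (cmod ((\<Sum>i<K. U n i * z i) - y n))\<^sup>2)" for z
    unfolding vnorm_def by (simp add: Af_def)
  have "closed {z. sqrt (\<Sum>n<N. (cmod ((\<Sum>i<K. U n i * z i) - y n))\<^sup>2) \<le> \<eta>}"
    by (rule closed_Collect_le) (intro continuous_intros)+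
  thus ?thesis by (simp add: eq)
qed

lemma min_a:
  assumes R: "RanU \<phi> \<tau> t N w = RanUPK \<phi> \<tau> t N K"
    and ex: "\<exists>v. in_l1w w v \<and> Uop \<phi> \<tau> t N v = y"
  shows "\<exists>z. (\<forall>i\<ge>K. z i = 0) \<and> Uop \<phi> \<tau> t N z = y \<and>
              (\<forall>z'. (\<forall>i\<ge>K. z' i = 0) \<and> Uop \<phi> \<tau> t N z' = y \<longrightarrow> norm1w w z \<le> norm1w w z')"
proof -
  have "y \<in> RanU \<phi> \<tau> t N w" using ex by (auto simp: RanU_def)
  hence "y \<in> range (Af K)" using R by (simp add: RanUPK_eq)
  then obtain a where a: "Af K a = y" by auto
  define S where "S = {z::nat \<Rightarrow> complex. \<forall>i. K \<le> i \<longrightarrow> z i = 0} \<inter> {z. \<forall>n. Af K z n = y n}"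
  have cl: "closed S" unfolding S_def by (intro closed_Int closed_supp closed_Af)
  have z0: "projK K a \<in> S" using a projK_supp[of K a] by (auto simp: S_def Af_proj)
  have sub: "\<And>z. z \<in> S \<Longrightarrow> \<forall>i\<ge>K. z i = 0" by (auto simp: S_def)
  obtain z where z: "z \<in> S" "\<forall>z'\<in>S. (\<Sum>i<K. w i * cmod (z i)) \<le> (\<Sum>i<K. w i * cmod (z' i))"
    using min_exists[where S=S and w=w, OF cl sub z0 w_pos] by blast
  have zs: "\<forall>i\<ge>K. z i = 0" using sub[OF z(1)] .
  have "Uop \<phi> \<tau> t N z = y" using z(1) Uop_fin[OF zs] by (auto simp: S_def fun_eq_iff)
  moreover have "norm1w w z \<le> norm1w w z'" if "\<forall>i\<ge>K. z' i = 0" "Uop \<phi> \<tau> t N z' = y" for z'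
  proof -
    have "z' \<in> S" using that Uop_fin[OF that(1)] by (auto simp: S_def)
    thus ?thesis using z(2) fin_l1(2)[OF zs] fin_l1(2)[OF that(1)] by simp
  qed
  ultimately show ?thesis using zs by blast
qed

lemma min_b:
  assumes R: "RanU \<phi> \<tau> t N w = RanUPK \<phi> \<tau> t N K"
    and ex: "\<exists>v. in_l1w w v \<and> vnorm N (\<lambda>n. Uop \<phi> \<tau> t N v n - y n) \<le> \<eta>"
  shows "\<exists>z. (\<forall>i\<ge>K. z i = 0) \<and> vnorm N (\<lambda>n. Uop \<phi> \<tau> t N z n - y n) \<le> \<eta> \<and>
              (\<forall>z'. (\<forall>i\<ge>K. z' i = 0) \<and> vnorm N (\<lambda>n. Uop \<phi> \<tau> t N z' n - y n) \<le> \<eta>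
                 \<longrightarrow> norm1w w z \<le> norm1w w z')"
proof -
  obtain v where v: "in_l1w w v" "vnorm N (\<lambda>n. Uop \<phi> \<tau> t N v n - y n) \<le> \<eta>" using ex by blast
  have "Uop \<phi> \<tau> t N v \<in> RanU \<phi> \<tau> t N w" using v(1) by (auto simp: RanU_def)
  hence "Uop \<phi> \<tau> t N v \<in> range (Af K)" using R by (simp add: RanUPK_eq)
  then obtain a where a: "Af K a = Uop \<phi> \<tau> t N v" by auto
  define S where "S = {z::nat \<Rightarrow> complex. \<forall>i. K \<le> i \<longrightarrow> z i = 0} \<inter> {z. vnorm N (\<lambda>n. Af K z n - y n) \<le> \<eta>}"
  have cl: "closed S" unfolding S_def by (intro closed_Int closed_supp closed_vn)
  have z0: "projK K a \<in> S" using a v(2) projK_supp[of K a] by (auto simp: S_def Af_proj)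
  have sub: "\<And>z. z \<in> S \<Longrightarrow> \<forall>i\<ge>K. z i = 0" by (auto simp: S_def)
  obtain z where z: "z \<in> S" "\<forall>z'\<in>S. (\<Sum>i<K. w i * cmod (z i)) \<le> (\<Sum>i<K. w i * cmod (z' i))"
    using min_exists[where S=S and w=w, OF cl sub z0 w_pos] by blast
  have zs: "\<forall>i\<ge>K. z i = 0" using sub[OF z(1)] .
  have "vnorm N (\<lambda>n. Uop \<phi> \<tau> t N z n - y n) \<le> \<eta>" using z(1) Uop_fin[OF zs] by (auto simp: S_def)
  moreover have "norm1w w z \<le> norm1w w z'"
    if "\<forall>i\<ge>K. z' i = 0" "vnorm N (\<lambda>n. Uop \<phi> \<tau> t N z' n - y n) \<le> \<eta>" for z'
  proof -
    have "z' \<in> S" using that Uop_fin[OF that(1)] by (auto simp: S_def)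
    thus ?thesis using z(2) fin_l1(2)[OF zs] fin_l1(2)[OF that(1)] by simp
  qed
  ultimately show ?thesis using zs by blast
qed

end


lemma dist_eq_hyper:
  fixes a b :: "'a::euclidean_space"
  shows "{s. dist s a = dist s b} = {s. (2 *\<^sub>R (b - a)) \<bullet> s = b \<bullet> b - a \<bullet> a}"
proof -
  have "dist s a = dist s b \<longleftrightarrow> (2 *\<^sub>R (b - a)) \<bullet> s = b \<bullet> b - a \<bullet> a" for s
  proof -
    have "dist s a = dist s b \<longleftrightarrow> (dist s a)\<^sup>2 = (dist s b)\<^sup>2"
      by (simp add: power2_eq_iff_nonneg)
    also have "(dist s a)\<^sup>2 = s \<bullet> s - 2 * (a \<bullet> s) + a \<bullet> a"
      by (simp add: dist_norm power2_norm_eq_inner inner_diff_left inner_diff_right inner_commute)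
    also have "(dist s b)\<^sup>2 = s \<bullet> s - 2 * (b \<bullet> s) + b \<bullet> b"
      by (simp add: dist_norm power2_norm_eq_inner inner_diff_left inner_diff_right inner_commute)
    finally show ?thesis by (auto simp: inner_diff_left)
  qed
  thus ?thesis by auto
qed

lemma hyper_null:
  fixes a b :: "'a::euclidean_space"
  assumes "a \<noteq> b"
  shows "{s. dist s a = dist s b} \<in> null_sets lborel"
proof -
  have ne: "2 *\<^sub>R (b - a) \<noteq> 0" using assms by simp
  have "negligible {s. (2 *\<^sub>R (b - a)) \<bullet> s = b \<bullet> b - a \<bullet> a}"
    by (rule negligible_hyperplane) (use ne in blast)
  hence "{s. dist s a = dist s b} \<in> null_sets lebesgue"
    by (simp add: dist_eq_hyper negligible_iff_null_sets)
  moreover have "closed {s. dist s a = dist s b}" by (intro closed_Collect_eq continuous_intros)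
  hence "{s. dist s a = dist s b} \<in> sets borel" by (rule borel_closed)
  hence "{s. dist s a = dist s b} \<in> sets lborel" by simp
  ultimately show ?thesis by (simp add: null_sets_completion_iff)
qed

lemma voronoi_sets:
  fixes D :: "'a::euclidean_space set"
  assumes "open D"
  shows "voronoi D t N n \<in> sets lborel"
proof -
  have cl: "closed {s. dist s (t n) \<le> dist s (t m)}" for m
    by (intro closed_Collect_le continuous_intros)
  have "voronoi D t N n = D \<inter> (\<Inter>m\<in>{m. m < N \<and> m \<noteq> n}. {s. dist s (t n) \<le> dist s (t m)})"
    by (auto simp: voronoi_def)
  also have "\<dots> \<in> sets borel"
    by (rule sets.Int[OF borel_open[OF assms] borel_closed[OF closed_INT]]) (use cl in blast)
  finally show ?thesis by simp
qed

lemma qweight_nn: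
  fixes D :: "'a::euclidean_space set"
  assumes "\<And>s. s \<in> D \<Longrightarrow> 0 \<le> \<nu> s"
  shows "0 \<le> qweight \<nu> D t N n"
  unfolding qweight_def set_lebesgue_integral_def
  by (rule integral_nonneg_AE, rule AE_I2) (auto simp: indicator_def voronoi_def assms)

lemma qweight_sum:
  fixes D :: "'a::euclidean_space set"
  assumes D_open: "open D" and nn: "\<And>s. s \<in> D \<Longrightarrow> 0 \<le> \<nu> s"
    and int: "set_integrable lborel D \<nu>"
    and one: "(LINT s:D|lborel. \<nu> s) = 1" and inj: "inj_on t {..<N}"
  shows "(\<Sum>n<N. qweight \<nu> D t N n) \<le> 1"
proof -
  let ?V = "voronoi D t N"
  have Vsub: "?V n \<subseteq> D" for n by (auto simp: voronoi_def)
  have iV: "integrable lborel (\<lambda>s. indicator (?V n) s *\<^sub>R \<nu> s)" for n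
    using set_integrable_subset[OF int voronoi_sets[OF D_open] Vsub] unfolding set_integrable_def .
  have iD: "integrable lborel (\<lambda>s. indicator D s *\<^sub>R \<nu> s)" using int unfolding set_integrable_def .
  define H where "H n m = {s. dist s (t n) = dist s (t m)}" for n m
  have AE: "AE s in lborel. \<forall>p\<in>{..<N}\<times>{..<N}. fst p \<noteq> snd p \<longrightarrow> s \<notin> H (fst p) (snd p)"
  proof (rule AE_finite_allI)
    fix p assume p: "p \<in> {..<N}\<times>{..<N}"
    show "AE s in lborel. fst p \<noteq> snd p \<longrightarrow> s \<notin> H (fst p) (snd p)"
    proof (cases "fst p = snd p")
      case True thus ?thesis by simp
    next
      case False
      hence "t (fst p) \<noteq> t (snd p)" using inj p by (auto simp: inj_on_def)
      hence "H (fst p) (snd p) \<in> null_sets lborel" unfolding H_def by (rule hyper_null)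
      from AE_not_in[OF this] show ?thesis by eventually_elim simp
    qed
  qed simp
  have "(\<Sum>n<N. qweight \<nu> D t N n) = (LINT s|lborel. (\<Sum>n<N. indicator (?V n) s *\<^sub>R \<nu> s))"
    unfolding qweight_def set_lebesgue_integral_def using Bochner_Integration.integral_sum[where I="{..<N}" and M=lborel and f="\<lambda>n s. indicator (?V n) s *\<^sub>R \<nu> s"] iV by simp
  also have "\<dots> \<le> (LINT s|lborel. indicator D s *\<^sub>R \<nu> s)"
  proof (rule integral_mono_AE)
    show "integrable lborel (\<lambda>s. \<Sum>n<N. indicator (?V n) s *\<^sub>R \<nu> s)"
      by (rule Bochner_Integration.integrable_sum) (rule iV)
    show "integrable lborel (\<lambda>s. indicator D s *\<^sub>R \<nu> s)" by (rule iD)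
    from AE show "AE s in lborel. (\<Sum>n<N. indicator (?V n) s *\<^sub>R \<nu> s) \<le> indicator D s *\<^sub>R \<nu> s"
    proof eventually_elim
      fix s assume s: "\<forall>p\<in>{..<N}\<times>{..<N}. fst p \<noteq> snd p \<longrightarrow> s \<notin> H (fst p) (snd p)"
      show "(\<Sum>n<N. indicator (?V n) s *\<^sub>R \<nu> s) \<le> indicator D s *\<^sub>R \<nu> s"
      proof (cases "s \<in> D")
        case False
        hence "\<forall>n. s \<notin> ?V n" using Vsub by blast
        thus ?thesis using False by simp
      next
        case True
        have c1: "card ({..<N} \<inter> {n. s \<in> ?V n}) \<le> Suc 0"
        proof (subst card_le_Suc0_iff_eq, simp, intro ballI)
          fix a1 a2 assume a: "a1 \<in> {..<N} \<inter> {n. s \<in> ?V n}" "a2 \<in> {..<N} \<inter> {n. s \<in> ?V n}"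
          show "a1 = a2"
          proof (rule ccontr)
            assume ne: "a1 \<noteq> a2"
            have "dist s (t a1) \<le> dist s (t a2)" "dist s (t a2) \<le> dist s (t a1)"
              using a ne by (auto simp: voronoi_def)
            hence "s \<in> H a1 a2" by (simp add: H_def)
            thus False using s a ne by auto
          qed
        qed
        have "(\<Sum>n<N. indicator (?V n) s *\<^sub>R \<nu> s) = (\<Sum>n<N. indicator {n. s \<in> ?V n} n) * \<nu> s"
          by (simp add: sum_distrib_right indicator_def)
        also have "(\<Sum>n<N. indicator {n. s \<in> ?V n} n) = real (card ({..<N} \<inter> {n. s \<in> ?V n}))"
          unfolding indicator_def by (simp add: sum.If_cases Int_def)
        finally have eq: "(\<Sum>n<N. indicator (?V n) s *\<^sub>R \<nu> s) = real (card ({..<N} \<inter> {n. s \<in> ?V n})) * \<nu> s" .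
        have le: "real (card ({..<N} \<inter> {n. s \<in> ?V n})) * \<nu> s \<le> 1 * \<nu> s"
          by (rule mult_right_mono) (use c1 nn[OF True] in auto)
        have ind: "indicator D s *\<^sub>R \<nu> s = 1 * \<nu> s" using True by simp
        show ?thesis unfolding eq ind by (rule le)
      qed
    qed
  qed
  also have "\<dots> = 1" using one unfolding set_lebesgue_integral_def .
  finally show ?thesis .
qed



theorem theorem6p1:
  fixes D :: "'a::euclidean_space set"
    and \<nu> :: "'a \<Rightarrow> real"
    and \<phi> :: "nat \<Rightarrow> 'a \<Rightarrow> complex"
    and t :: "nat \<Rightarrow> 'a" and N :: nat
    and \<tau> :: "nat \<Rightarrow> real"
    and w :: "nat \<Rightarrow> real"
    and x :: "nat \<Rightarrow> complex" and e :: "nat \<Rightarrow> complex" and \<eta> :: real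
    and f :: "'a \<Rightarrow> complex" and y :: "nat \<Rightarrow> complex"
  assumes D_open: "open D" and D_conn: "connected D" and D_ne: "D \<noteq> {}"
    and nu_nonneg: "\<And>s. s \<in> D \<Longrightarrow> 0 \<le> \<nu> s"
    and nu_int: "set_integrable lborel D \<nu>"
    and nu_one: "(LINT s:D|lborel. \<nu> s) = 1"
    and phi_meas: "\<And>i. set_borel_measurable lborel D (\<phi> i)"
    and phi_L2: "\<And>i. set_integrable lborel D (\<lambda>s. \<nu> s * (cmod (\<phi> i s))\<^sup>2)"
    and phi_orth: "\<And>i j. (LINT s:D|lborel. complex_of_real (\<nu> s) * \<phi> i s * cnj (\<phi> j s))
                        = (if i = j then 1 else 0)"
    and N_pos: "0 < N"
    and t_in: "\<And>n. n < N \<Longrightarrow> t n \<in> closure D"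
    and t_inj: "inj_on t {..<N}"
    and tau_def: "\<And>n. \<tau> n = qweight \<nu> D t N n"
    and w_pos: "\<And>i. 0 < w i"
    and w_bound: "\<And>i s. s \<in> closure D \<Longrightarrow> cmod (\<phi> i s) \<le> w i"
    and f_def: "\<And>s. f s = (\<Sum>i. x i * \<phi> i s)"
    and e_bound: "\<And>n. n < N \<Longrightarrow> cmod (e n) \<le> \<eta>"
    and y_def: "y = (\<lambda>n. if n < N then complex_of_real (sqrt (\<tau> n)) * (f (t n) + e n) else 0)"
  shows
    "(\<exists>K0. \<forall>K\<ge>K0.
        RanU \<phi> \<tau> t N w = RanUPK \<phi> \<tau> t N K
      \<and> ((\<exists>v. in_l1w w v \<and> Uop \<phi> \<tau> t N v = y) \<longrightarrow>
           (\<exists>z. (\<forall>i\<ge>K. z i = 0) \<and> Uop \<phi> \<tau> t N z = y \<and>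
              (\<forall>z'. (\<forall>i\<ge>K. z' i = 0) \<and> Uop \<phi> \<tau> t N z' = y \<longrightarrow> norm1w w z \<le> norm1w w z')))
      \<and> ((\<exists>v. in_l1w w v \<and> vnorm N (\<lambda>n. Uop \<phi> \<tau> t N v n - y n) \<le> \<eta>) \<longrightarrow>
           (\<exists>z. (\<forall>i\<ge>K. z i = 0) \<and> vnorm N (\<lambda>n. Uop \<phi> \<tau> t N z n - y n) \<le> \<eta> \<and>
              (\<forall>z'. (\<forall>i\<ge>K. z' i = 0) \<and> vnorm N (\<lambda>n. Uop \<phi> \<tau> t N z' n - y n) \<le> \<eta>
                 \<longrightarrow> norm1w w z \<le> norm1w w z'))))
   \<and> (\<forall>K. RanUPK \<phi> \<tau> t N K = RanU \<phi> \<tau> t N w \<longrightarrow> 0 < sigma_min \<phi> \<tau> t N K \<longrightarrow>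
        (in_l1w w x \<longrightarrow>
           Thk \<phi> \<tau> t N w y K \<eta> x
             \<le> norm1w w (x - projK K x)
               + sqrt (\<Sum>i<K. (w i)\<^sup>2) / sigma_min \<phi> \<tau> t N K * norm1w w (x - projK K x))
      \<and> (\<forall>wt :: nat \<Rightarrow> real. mono w \<and> (\<forall>i. sqrt (real (i + 1)) * (w i)\<^sup>2 \<le> wt i) \<and> in_l1w wt x \<longrightarrow>
           Thk \<phi> \<tau> t N w y K \<eta> x
             \<le> norm1w w (x - projK K x)
               + 1 / sigma_min \<phi> \<tau> t N K * norm1w wt (x - projK K x)))"
proof -
  have tnn: "\<And>n. 0 \<le> \<tau> n" using qweight_nn[of D \<nu>] nu_nonneg tau_def by auto
  have tsum: "(\<Sum>n<N. \<tau> n) \<le> 1"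
    using qweight_sum[OF D_open nu_nonneg nu_int nu_one t_inj] tau_def by simp
  have pb: "\<And>i n. n < N \<Longrightarrow> cmod (\<phi> i (t n)) \<le> w i" using w_bound t_in by blast
  interpret S: setting \<phi> \<tau> t N w
    by unfold_locales (fact tnn, fact tsum, fact pb, fact w_pos)
  have eta: "0 \<le> \<eta>" using e_bound[OF N_pos] norm_ge_zero[of "e 0"] by linarith
  have feas: "vnorm N (\<lambda>n. Uop \<phi> \<tau> t N x n - y n) \<le> \<eta>" if x: "in_l1w w x"
  proof (rule S.vnorm_bound[OF eta])
    fix n assume n: "n < N"
    have le: "norm (x i * \<phi> i (t n)) \<le> w i * cmod (x i)" for i
      using mult_left_mono[OF pb[OF n, of i] norm_ge_zero[of "x i"]] by (simp add: norm_mult mult.commute)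
    have sm: "summable (\<lambda>i. x i * \<phi> i (t n))"
      by (rule summable_norm_cancel, rule summable_comparison_test'[OF x[unfolded in_l1w_def]])
         (use le in auto)
    have "Uop \<phi> \<tau> t N x n = (\<Sum>i. complex_of_real (sqrt (\<tau> n)) * (x i * \<phi> i (t n)))"
      by (simp add: Uop_def Umat_def n mult_ac)
    also have "\<dots> = complex_of_real (sqrt (\<tau> n)) * f (t n)"
      using suminf_mult[OF sm] f_def by simp
    finally have "Uop \<phi> \<tau> t N x n - y n = - (complex_of_real (sqrt (\<tau> n)) * e n)"
      using n by (simp add: y_def algebra_simps)
    hence "cmod (Uop \<phi> \<tau> t N x n - y n) = sqrt (\<tau> n) * cmod (e n)"
      using tnn[of n] by (simp add: norm_mult)
    also have "\<dots> \<le> sqrt (\<tau> n) * \<eta>" by (rule mult_left_mono[OF e_bound[OF n]]) (simp add: tnn)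
    finally show "cmod (Uop \<phi> \<tau> t N x n - y n) \<le> sqrt (\<tau> n) * \<eta>" .
  qed
  obtain K0 where K0: "\<forall>K\<ge>K0. RanU \<phi> \<tau> t N w = RanUPK \<phi> \<tau> t N K" using S.ran_stab by blast
  have P1: "\<forall>K\<ge>K0.
        RanU \<phi> \<tau> t N w = RanUPK \<phi> \<tau> t N K
      \<and> ((\<exists>v. in_l1w w v \<and> Uop \<phi> \<tau> t N v = y) \<longrightarrow>
           (\<exists>z. (\<forall>i\<ge>K. z i = 0) \<and> Uop \<phi> \<tau> t N z = y \<and>
              (\<forall>z'. (\<forall>i\<ge>K. z' i = 0) \<and> Uop \<phi> \<tau> t N z' = y \<longrightarrow> norm1w w z \<le> norm1w w z')))
      \<and> ((\<exists>v. in_l1w w v \<and> vnorm N (\<lambda>n. Uop \<phi> \<tau> t N v n - y n) \<le> \<eta>) \<longrightarrow>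
           (\<exists>z. (\<forall>i\<ge>K. z i = 0) \<and> vnorm N (\<lambda>n. Uop \<phi> \<tau> t N z n - y n) \<le> \<eta> \<and>
              (\<forall>z'. (\<forall>i\<ge>K. z' i = 0) \<and> vnorm N (\<lambda>n. Uop \<phi> \<tau> t N z' n - y n) \<le> \<eta>
                 \<longrightarrow> norm1w w z \<le> norm1w w z')))"
  proof (intro allI impI conjI)
    fix K assume K: "K0 \<le> K"
    hence R: "RanU \<phi> \<tau> t N w = RanUPK \<phi> \<tau> t N K" using K0 by blast
    show "RanU \<phi> \<tau> t N w = RanUPK \<phi> \<tau> t N K" by (rule R)
    show "\<exists>z. (\<forall>i\<ge>K. z i = 0) \<and> Uop \<phi> \<tau> t N z = y \<and>
              (\<forall>z'. (\<forall>i\<ge>K. z' i = 0) \<and> Uop \<phi> \<tau> t N z' = y \<longrightarrow> norm1w w z \<le> norm1w w z')"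
      if "\<exists>v. in_l1w w v \<and> Uop \<phi> \<tau> t N v = y" using S.min_a[OF R that] by blast
    show "\<exists>z. (\<forall>i\<ge>K. z i = 0) \<and> vnorm N (\<lambda>n. Uop \<phi> \<tau> t N z n - y n) \<le> \<eta> \<and>
              (\<forall>z'. (\<forall>i\<ge>K. z' i = 0) \<and> vnorm N (\<lambda>n. Uop \<phi> \<tau> t N z' n - y n) \<le> \<eta>
                 \<longrightarrow> norm1w w z \<le> norm1w w z')"
      if "\<exists>v. in_l1w w v \<and> vnorm N (\<lambda>n. Uop \<phi> \<tau> t N v n - y n) \<le> \<eta>"
      using S.min_b[OF R that] by blast
  qed
  have P2: "\<forall>K. RanUPK \<phi> \<tau> t N K = RanU \<phi> \<tau> t N w \<longrightarrow> 0 < sigma_min \<phi> \<tau> t N K \<longrightarrow>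
        (in_l1w w x \<longrightarrow>
           Thk \<phi> \<tau> t N w y K \<eta> x
             \<le> norm1w w (x - projK K x)
               + sqrt (\<Sum>i<K. (w i)\<^sup>2) / sigma_min \<phi> \<tau> t N K * norm1w w (x - projK K x))
      \<and> (\<forall>wt :: nat \<Rightarrow> real. mono w \<and> (\<forall>i. sqrt (real (i + 1)) * (w i)\<^sup>2 \<le> wt i) \<and> in_l1w wt x \<longrightarrow>
           Thk \<phi> \<tau> t N w y K \<eta> x
             \<le> norm1w w (x - projK K x)
               + 1 / sigma_min \<phi> \<tau> t N K * norm1w wt (x - projK K x))"
  proof (intro allI impI conjI)
    fix K assume sig: "0 < sigma_min \<phi> \<tau> t N K"
    show "Thk \<phi> \<tau> t N w y K \<eta> x
             \<le> norm1w w (x - projK K x)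
               + sqrt (\<Sum>i<K. (w i)\<^sup>2) / sigma_min \<phi> \<tau> t N K * norm1w w (x - projK K x)"
      if x: "in_l1w w x" by (rule S.T_bound1[OF N_pos sig x feas[OF x]])
    fix wt :: "nat \<Rightarrow> real"
    assume h: "mono w \<and> (\<forall>i. sqrt (real (i + 1)) * (w i)\<^sup>2 \<le> wt i) \<and> in_l1w wt x"
    hence m: "mono w" and wt: "\<forall>i. sqrt (real (i + 1)) * (w i)\<^sup>2 \<le> wt i" and xt: "in_l1w wt x"
      by auto
    show "Thk \<phi> \<tau> t N w y K \<eta> x
             \<le> norm1w w (x - projK K x)
               + 1 / sigma_min \<phi> \<tau> t N K * norm1w wt (x - projK K x)"
      by (rule S.T_bound2[OF N_pos sig m wt xt feas[OF S.wt_l1[OF m wt xt]]])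
  qed
  show ?thesis using P1 P2 by blast
qed


end
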